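(* Let $d\ge 1$ and $1\le p<q<\infty$. Then the discrete Morrey space $\ell^p_q(\mathbb{Z}^d)$ satisfies $$C_{\rm NJ}(\ell^p_q)=C_{\rm J}(\ell^p_q)=2\quad\text{and}\quad C_{\rm DW}(\ell^p_q)=4.$$
   Context: Let $\omega:=\mathbb{N}\cup\{0\}$. For $m\in\mathbb{Z}^d$ and $N\in\omega$ let $S_{m,N}:=\{k\in\mathbb{Z}^d:\|k-m\|_\infty\le N\}$, where $\|(k_1,\dots,k_d)\|_\infty=\max_i|k_i|$; its cardinality is $|S_{m,N}|=(2N+1)^d$. For $1\le p\le q<\infty$, the discrete Morrey space $\ell^p_q=\ell^p_q(\mathbb{Z}^d)$ is the Banach space of all functions $x:\mathbb{Z}^d\to\mathbb{R}$ with $$\|x\|_{\ell^p_q}:=\sup_{m\in\mathbb{Z}^d,\,N\in\omega}|S_{m,N}|^{\frac1q-\frac1p}\Big(\sum_{k\in S_{m,N}}|x(k)|^p\Big)^{1/p}<\infty.$$ For a Banach space $X$: the von Neumann–Jordan constant is $C_{\rm NJ}(X):=\sup\Big\{\frac{\|x+y\|_X^2+\|x-y\|_X^2}{2(\|x\|_X^2+\|y\|_X^2)}: x,y\in X\setminus\{0\}\Big\}$; the James constant is $C_{\rm J}(X):=\sup\{\min\{\|x+y\|_X,\|x-y\|_X\}: x,y\in X,\ \|x\|_X=\|y\|_X=1\}$; the Dunkl–Williams constant is $C_{\rm DW}(X):=\sup\Big\{\frac{\|x\|_X+\|y\|_X}{\|x-y\|_X}\Big\|\frac{x}{\|x\|_X}-\frac{y}{\|y\|_X}\Big\|_X: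 x,y\in X,\ x\neq0,\ y\neq0,\ x\neq y\Big\}$. *)

theory Defs
  imports "HOL-Analysis.Analysis"
begin

text \<open>Points of Z^d are int vectors indexed by a finite type 'd (d = CARD('d) \<ge> 1).\<close>

definition cube :: "int ^ 'd \<Rightarrow> nat \<Rightarrow> (int ^ 'd) set" where
  "cube m N = {k. (\<forall>i. \<bar>k $ i - m $ i\<bar> \<le> int N)}"

definition morrey_norm :: "real \<Rightarrow> real \<Rightarrow> (int ^ ('d::finite) \<Rightarrow> real) \<Rightarrow> real" where
  "morrey_norm p q x =
     (SUP mN \<in> (UNIV :: ((int ^ 'd) \<times> nat) set).
        real (card (cube (fst mN) (snd mN))) powr (1/q - 1/p) *
        (\<Sum>k\<in>cube (fst mN) (snd mN). \<bar>x k\<bar> powr p) powr (1/p))"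

definition morrey_space :: "real \<Rightarrow> real \<Rightarrow> (int ^ ('d::finite) \<Rightarrow> real) set" where
  "morrey_space p q = {x. bdd_above ((\<lambda>mN. 
        real (card (cube (fst mN) (snd mN))) powr (1/q - 1/p) *
        (\<Sum>k\<in>cube (fst mN) (snd mN). \<bar>x k\<bar> powr p) powr (1/p)) ` UNIV)}"

definition C_NJ :: "('b \<Rightarrow> real) set \<Rightarrow> (('b \<Rightarrow> real) \<Rightarrow> real) \<Rightarrow> ereal" where
  "C_NJ X nrm = Sup {ereal (((nrm (\<lambda>k. x k + y k))\<^sup>2 + (nrm (\<lambda>k. x k - y k))\<^sup>2) / (2 * ((nrm x)\<^sup>2 + (nrm y)\<^sup>2))) |
      x y. x \<in> X \<and> y \<in> X \<and> x \<noteq> (\<lambda>_. 0) \<and> y \<noteq> (\<lambda>_. 0)}"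

definition C_J :: "('b \<Rightarrow> real) set \<Rightarrow> (('b \<Rightarrow> real) \<Rightarrow> real) \<Rightarrow> ereal" where
  "C_J X nrm = Sup {ereal (min (nrm (\<lambda>k. x k + y k)) (nrm (\<lambda>k. x k - y k))) |
      x y. x \<in> X \<and> y \<in> X \<and> nrm x = 1 \<and> nrm y = 1}"

definition C_DW :: "('b \<Rightarrow> real) set \<Rightarrow> (('b \<Rightarrow> real) \<Rightarrow> real) \<Rightarrow> ereal" where
  "C_DW X nrm = Sup {ereal ((nrm x + nrm y) / nrm (\<lambda>k. x k - y k) * nrm (\<lambda>k. x k / nrm x - y k / nrm y)) |
      x y. x \<in> X \<and> y \<in> X \<and> x \<noteq> (\<lambda>_. 0) \<and> y \<noteq> (\<lambda>_. 0) \<and> x \<noteq> y}"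

end

theory Submission
  imports Defs
begin

lemma cvx_pt:
  fixes uu vv t p :: real
  assumes "0 \<le> uu" "0 \<le> vv" "0 \<le> t" "t \<le> 1" "1 \<le> p"
  shows "(t* uu + (1-t)* vv) powr p \<le> t * uu powr p + (1-t) * vv powr p"
proof -
  have key: "(c*w) powr p \<le> c * w powr p" if "0\<le>c" "c\<le>1" "0 \<le> w" for c w :: real
  proof -
    have "(c*w) powr p = c powr p * w powr p" by (simp add: powr_mult)
    also have "c powr p \<le> c powr 1" using that assms by (intro powr_mono') auto
    hence "c powr p * w powr p \<le> c * w powr p" using that by (intro mult_right_mono) auto
    finally show ?thesis .
  qed
  show ?thesis
  proof (cases "uu = 0 \<or> vv = 0")
    case True
    then show ?thesis
    proof
      assume "uu=0" thus ?thesis using key[of "1-t" vv] assms by simp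
    next
      assume "vv=0" thus ?thesis using key[of t uu] assms by simp
    qed
  next
    case False
    hence "uu > 0" "vv > 0" using assms by auto
    from convex_onD[OF powr_convex[OF assms(5)], of t vv uu] this assms
    show ?thesis by (simp add: algebra_simps)
  qed
qed

lemma minkowski:
  fixes a b :: "'a \<Rightarrow> real" and p :: real
  assumes "finite S" "\<And>k. 0 \<le> a k" "\<And>k. 0 \<le> b k" "1 \<le> p"
  shows "(\<Sum>k\<in>S. (a k + b k) powr p) powr (1/p) \<le>
     (\<Sum>k\<in>S. a k powr p) powr (1/p) + (\<Sum>k\<in>S. b k powr p) powr (1/p)"
proof -
  define A where "A = (\<Sum>k\<in>S. a k powr p) powr (1/p)"
  define B where "B = (\<Sum>k\<in>S. b k powr p) powr (1/p)"
  have p0: "p > 0" using assms by simp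
  have Ap: "A powr p = (\<Sum>k\<in>S. a k powr p)" unfolding A_def
    using p0 by (simp add: powr_powr sum_nonneg)
  have Bp: "B powr p = (\<Sum>k\<in>S. b k powr p)" unfolding B_def
    using p0 by (simp add: powr_powr sum_nonneg)
  show ?thesis
  proof (cases "A = 0 \<or> B = 0")
    case True
    then show ?thesis
    proof
      assume "A = 0"
      hence "(\<Sum>k\<in>S. a k powr p) = 0" using Ap by simp
      hence "\<forall>k\<in>S. a k = 0" using assms by (simp add: sum_nonneg_eq_0_iff)
      thus ?thesis using \<open>A=0\<close> unfolding A_def B_def by simp
    next
      assume "B = 0"
      hence "(\<Sum>k\<in>S. b k powr p) = 0" using Bp by simp
      hence "\<forall>k\<in>S. b k = 0" using assms by (simp add: sum_nonneg_eq_0_iff)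
      thus ?thesis using \<open>B=0\<close> unfolding A_def B_def by simp
    qed
  next
    case False
    hence A0: "A > 0" and B0: "B > 0" unfolding A_def B_def by auto
    define t where "t = A / (A+B)"
    have t01: "0 \<le> t" "t \<le> 1" using A0 B0 by (auto simp: t_def)
    have 1: "1 - t = B/(A+B)" using A0 B0 by (simp add: t_def field_simps)
    have pt: "((a k + b k)/(A+B)) powr p \<le> t * (a k powr p / A powr p) + (1-t) * (b k powr p / B powr p)" for k
    proof -
      have "(a k + b k)/(A+B) = t * (a k / A) + (1-t) * (b k / B)"
        unfolding 1 using A0 B0 by (simp add: t_def add_divide_distrib)
      hence "((a k + b k)/(A+B)) powr p = (t * (a k / A) + (1-t) * (b k / B)) powr p" by simp
      also have "\<dots> \<le> t * (a k / A) powr p + (1-t) * (b k / B) powr p"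
        using A0 B0 assms t01 by (intro cvx_pt) auto
      finally show ?thesis by (simp add: powr_divide)
    qed
    have "(\<Sum>k\<in>S. ((a k + b k)/(A+B)) powr p) \<le> (\<Sum>k\<in>S. t * (a k powr p / A powr p) + (1-t) * (b k powr p / B powr p))"
      by (rule sum_mono) (rule pt)
    also have "\<dots> = t * ((\<Sum>k\<in>S. a k powr p) / A powr p) + (1-t) * ((\<Sum>k\<in>S. b k powr p) / B powr p)"
      by (simp add: sum.distrib sum_distrib_left sum_divide_distrib)
    also have "\<dots> = 1" using A0 B0 by (simp add: Ap[symmetric] Bp[symmetric])
    finally have "(\<Sum>k\<in>S. (a k + b k) powr p) / (A+B) powr p \<le> 1"
      by (simp add: powr_divide sum_divide_distrib)
    hence "(\<Sum>k\<in>S. (a k + b k) powr p) \<le> (A+B) powr p"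
      using A0 B0 by (simp add: divide_le_eq)
    hence "(\<Sum>k\<in>S. (a k + b k) powr p) powr (1/p) \<le> ((A+B) powr p) powr (1/p)"
      using p0 assms by (intro powr_mono2) (auto intro: sum_nonneg)
    also have "\<dots> = A + B" using A0 B0 p0 by (simp add: powr_powr)
    finally show ?thesis unfolding A_def B_def .
  qed
qed


definition mterm :: "real \<Rightarrow> real \<Rightarrow> (int ^ ('d::finite) \<Rightarrow> real) \<Rightarrow> (int ^ 'd) \<times> nat \<Rightarrow> real" where
  "mterm p q x mN = real (card (cube (fst mN) (snd mN))) powr (1/q - 1/p) *
        (\<Sum>k\<in>cube (fst mN) (snd mN). \<bar>x k\<bar> powr p) powr (1/p)"

lemma morrey_norm_eq: "morrey_norm p q x = (SUP mN \<in> UNIV. mterm p q x mN)"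
  unfolding morrey_norm_def mterm_def ..

lemma morrey_space_eq: "morrey_space p q = {x. bdd_above (range (mterm p q x))}"
  unfolding morrey_space_def mterm_def ..

lemma mterm_nonneg: "0 \<le> mterm p q x mN"
  unfolding mterm_def by simp

lemma scale_sum:
  fixes a :: "'a \<Rightarrow> real"
  assumes "0 \<le> c" "p > 0" "\<And>k. 0 \<le> a k"
  shows "(\<Sum>k\<in>S. (c * a k) powr p) powr (1/p) = c * (\<Sum>k\<in>S. a k powr p) powr (1/p)"
proof -
  have "(\<Sum>k\<in>S. (c * a k) powr p) = c powr p * (\<Sum>k\<in>S. a k powr p)"
    by (simp add: powr_mult sum_distrib_left)
  hence "(\<Sum>k\<in>S. (c * a k) powr p) powr (1/p) = (c powr p) powr (1/p) * (\<Sum>k\<in>S. a k powr p) powr (1/p)"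
    by (simp add: powr_mult)
  also have "(c powr p) powr (1/p) = c" using assms by (simp add: powr_powr powr_one)
  finally show ?thesis .
qed

lemma mterm_tri:
  fixes x y z :: "int ^ ('d::finite) \<Rightarrow> real"
  assumes p: "1 \<le> p" and c: "0 \<le> c1" "0 \<le> c2"
    and pw: "\<And>k. \<bar>z k\<bar> \<le> c1 * \<bar>x k\<bar> + c2 * \<bar>y k\<bar>"
  shows "mterm p q z mN \<le> c1 * mterm p q x mN + c2 * mterm p q y mN"
proof -
  define C where "C = cube (fst mN) (snd mN)"
  define w where "w = real (card C) powr (1/q - 1/p)"
  have p0: "p > 0" using p by simp
  show ?thesis
  proof (cases "finite C")
    case False
    thus ?thesis unfolding mterm_def C_def[symmetric] by simp
  next
    case True
    have "(\<Sum>k\<in>C. \<bar>z k\<bar> powr p) powr (1/p) \<le> (\<Sum>k\<in>C. (c1 * \<bar>x k\<bar> + c2 * \<bar>y k\<bar>) powr p) powr (1/p)"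
      using p0 pw by (intro powr_mono2 sum_mono sum_nonneg) auto
    also have "\<dots> \<le> (\<Sum>k\<in>C. (c1 * \<bar>x k\<bar>) powr p) powr (1/p) + (\<Sum>k\<in>C. (c2 * \<bar>y k\<bar>) powr p) powr (1/p)"
      using True c p by (intro minkowski) auto
    also have "\<dots> = c1 * (\<Sum>k\<in>C. \<bar>x k\<bar> powr p) powr (1/p) + c2 * (\<Sum>k\<in>C. \<bar>y k\<bar> powr p) powr (1/p)"
      using c p0 by (simp add: scale_sum)
    finally have "w * (\<Sum>k\<in>C. \<bar>z k\<bar> powr p) powr (1/p) \<le> w * (c1 * (\<Sum>k\<in>C. \<bar>x k\<bar> powr p) powr (1/p) + c2 * (\<Sum>k\<in>C. \<bar>y k\<bar> powr p) powr (1/p))"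
      by (intro mult_left_mono) (auto simp: w_def)
    thus ?thesis unfolding mterm_def C_def[symmetric] w_def[symmetric] by (simp add: algebra_simps)
  qed
qed

lemma mterm_le_norm: "x \<in> morrey_space p q \<Longrightarrow> mterm p q x mN \<le> morrey_norm p q x"
  unfolding morrey_space_eq morrey_norm_eq by (auto intro: cSUP_upper)

lemma norm_tri:
  fixes x y z :: "int ^ ('d::finite) \<Rightarrow> real"
  assumes p: "1 \<le> p" and c: "0 \<le> c1" "0 \<le> c2"
    and x: "x \<in> morrey_space p q" and y: "y \<in> morrey_space p q"
    and pw: "\<And>k. \<bar>z k\<bar> \<le> c1 * \<bar>x k\<bar> + c2 * \<bar>y k\<bar>"
  shows "z \<in> morrey_space p q \<and> morrey_norm p q z \<le> c1 * morrey_norm p q x + c2 * morrey_norm p q y"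
proof -
  have b: "mterm p q z mN \<le> c1 * morrey_norm p q x + c2 * morrey_norm p q y" for mN
  proof -
    have "mterm p q z mN \<le> c1 * mterm p q x mN + c2 * mterm p q y mN"
      by (rule mterm_tri[OF p c pw])
    also have "\<dots> \<le> c1 * morrey_norm p q x + c2 * morrey_norm p q y"
      using c mterm_le_norm[OF x] mterm_le_norm[OF y]
      by (intro add_mono mult_left_mono) auto
    finally show ?thesis .
  qed
  show ?thesis
  proof
    show "z \<in> morrey_space p q" unfolding morrey_space_eq mem_Collect_eq by (rule bdd_aboveI2) (rule b)
    show "morrey_norm p q z \<le> c1 * morrey_norm p q x + c2 * morrey_norm p q y"
      unfolding morrey_norm_eq[of p q z] using b by (intro cSUP_least) auto
  qed
qed

lemma cube_0: "cube m 0 = {m}"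
  unfolding cube_def by (auto simp: vec_eq_iff)

lemma mterm_point:
  assumes "p > 0"
  shows "mterm p q x (m, 0) = \<bar>x m\<bar>"
  using assms unfolding mterm_def by (simp add: cube_0 powr_powr)

lemma abs_le_norm:
  assumes "p > 0" "x \<in> morrey_space p q"
  shows "\<bar>x k\<bar> \<le> morrey_norm p q x"
  using mterm_le_norm[OF assms(2), of "(k,0)"] mterm_point[OF assms(1), of q x k] by simp

lemma norm_nonneg: "x \<in> morrey_space p q \<Longrightarrow> 0 \<le> morrey_norm p q x"
  using mterm_le_norm[of x p q] mterm_nonneg[of p q x] by (meson order_trans)


definition bump :: "int ^ ('d::finite) \<Rightarrow> real \<Rightarrow> real \<Rightarrow> int ^ 'd \<Rightarrow> real" where
  "bump a \<alpha> \<beta> = (\<lambda>k. (if k = 0 then \<alpha> else 0) + (if k = a then \<beta> else 0))"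

lemma card_cube_ge:
  fixes m :: "int ^ ('d::finite)" and M :: nat
  assumes "0 \<in> cube m N" "(\<chi> i. int M) \<in> cube m N" "finite (cube m N)"
  shows "M + 1 \<le> card (cube m N)"
proof -
  obtain i :: 'd where True by blast
  from assms(1,2) have "\<bar>0 - m $ i\<bar> \<le> int N" "\<bar>int M - m $ i\<bar> \<le> int N"
    unfolding cube_def by auto
  hence MN: "int M \<le> 2 * int N" by linarith
  define g where "g = (\<lambda>t::int. (\<chi> i. m $ i + t) :: int ^ 'd)"
  have inj: "inj_on g {- int N .. int N}"
    by (auto simp: inj_on_def g_def vec_eq_iff)
  have sub: "g ` {- int N .. int N} \<subseteq> cube m N"
    by (auto simp: g_def cube_def)
  have "card {- int N .. int N} \<le> card (cube m N)"
    by (rule card_inj_on_le[OF inj sub assms(3)])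
  moreover have "card {- int N .. int N} = 2 * N + 1" by simp
  ultimately show ?thesis using MN by linarith
qed

lemma bump_sum:
  fixes a :: "int ^ ('d::finite)"
  assumes "a \<noteq> 0" "p > 0" "finite C"
  shows "(\<Sum>k\<in>C. \<bar>bump a \<alpha> \<beta> k\<bar> powr p) =
     (if 0 \<in> C then \<bar>\<alpha>\<bar> powr p else 0) + (if a \<in> C then \<bar>\<beta>\<bar> powr p else 0)"
proof -
  have "\<bar>bump a \<alpha> \<beta> k\<bar> powr p = (if k = 0 then \<bar>\<alpha>\<bar> powr p else 0) + (if k = a then \<bar>\<beta>\<bar> powr p else 0)" for k
    using assms by (auto simp: bump_def)
  hence "(\<Sum>k\<in>C. \<bar>bump a \<alpha> \<beta> k\<bar> powr p) = (\<Sum>k\<in>C. (if k = 0 then \<bar>\<alpha>\<bar> powr p else 0) + (if k = a then \<bar>\<beta>\<bar> powr p else 0))"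
    by simp
  also have "\<dots> = (if 0 \<in> C then \<bar>\<alpha>\<bar> powr p else 0) + (if a \<in> C then \<bar>\<beta>\<bar> powr p else 0)"
    using assms(3) by (simp add: sum.distrib sum.delta)
  finally show ?thesis .
qed

lemma cube_center: "m \<in> cube m N"
  unfolding cube_def by auto

lemma witness:
  fixes p q :: real
  assumes p: "1 \<le> p" and pq: "p < q"
  shows "\<exists>a :: int ^ ('d::finite). a \<noteq> 0 \<and> (\<forall>\<alpha> \<beta>. bump a \<alpha> \<beta> \<in> morrey_space p q \<and>
            morrey_norm p q (bump a \<alpha> \<beta>) = max \<bar>\<alpha>\<bar> \<bar>\<beta>\<bar>)"
proof -
  have p0: "p > 0" using p by simp
  define r where "r = 1/p - 1/q"
  have r0: "r > 0" using p pq by (simp add: r_def frac_less2)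
  define M :: nat where "M = nat \<lceil>2 powr ((1/p)/r)\<rceil> + 1"
  have M1: "M \<ge> 1" by (simp add: M_def)
  have "2 powr ((1/p)/r) \<le> real M" unfolding M_def by linarith
  hence "(2 powr ((1/p)/r)) powr r \<le> real (M+1) powr r" using r0 by (intro powr_mono2) auto
  hence Mbig: "2 powr (1/p) \<le> real (M+1) powr r" using r0 by (simp add: powr_powr)
  define a :: "int ^ 'd" where "a = (\<chi> i. int M)"
  have a0: "a \<noteq> 0" using M1 by (auto simp: a_def vec_eq_iff)
  have upper: "mterm p q (bump a \<alpha> \<beta>) mN \<le> max \<bar>\<alpha>\<bar> \<bar>\<beta>\<bar>" for \<alpha> \<beta> mN
  proof -
    define C where "C = cube (fst mN) (snd mN)"
    define w where "w = real (card C) powr (1/q - 1/p)"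
    have mt: "mterm p q (bump a \<alpha> \<beta>) mN = w * (\<Sum>k\<in>C. \<bar>bump a \<alpha> \<beta> k\<bar> powr p) powr (1/p)"
      unfolding mterm_def C_def w_def ..
    show ?thesis
    proof (cases "finite C")
      case False
      thus ?thesis unfolding mt w_def by simp
    next
      case True
      have "fst mN \<in> C" unfolding C_def by (rule cube_center)
      hence c1: "card C \<ge> 1" using True by (auto simp: Suc_le_eq card_gt_0_iff)
      have w1: "w \<le> 1"
      proof -
        have "w \<le> real (card C) powr 0" unfolding w_def using c1 p pq
          by (intro powr_mono) (auto simp: frac_le)
        thus ?thesis using c1 by simp
      qed
      have w0: "0 \<le> w" by (simp add: w_def)
      have S: "(\<Sum>k\<in>C. \<bar>bump a \<alpha> \<beta> k\<bar> powr p) = (if 0 \<in> C then \<bar>\<alpha>\<bar> powr p else 0) + (if a \<in> C then \<bar>\<beta>\<bar> powr p else 0)"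
        by (rule bump_sum[OF a0 p0 True])
      show ?thesis
      proof (cases "0 \<in> C \<and> a \<in> C")
        case both: True
        have "M + 1 \<le> card C" using both True unfolding C_def a_def
          by (intro card_cube_ge) auto
        hence "w \<le> real (M+1) powr (1/q - 1/p)" unfolding w_def using p pq
          by (intro powr_mono2') (auto simp: frac_le)
        also have "\<dots> = inverse (real (M+1) powr r)" by (simp add: r_def powr_minus[symmetric])
        finally have wi: "w \<le> inverse (real (M+1) powr r)" .
        have R0: "0 < real (M+1) powr r" by simp
        have "w * 2 powr (1/p) \<le> inverse (real (M+1) powr r) * real (M+1) powr r"
          using wi Mbig R0 by (intro mult_mono) auto
        hence wle: "w * 2 powr (1/p) \<le> 1" using R0 by simp
        define mm where "mm = max \<bar>\<alpha>\<bar> \<bar>\<beta>\<bar>"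
        have "\<bar>\<alpha>\<bar> powr p + \<bar>\<beta>\<bar> powr p \<le> 2 * mm powr p"
          proof -
          have "\<bar>\<alpha>\<bar> powr p \<le> mm powr p" "\<bar>\<beta>\<bar> powr p \<le> mm powr p"
            unfolding mm_def using p0 by (intro powr_mono2; simp)+
          thus ?thesis by simp
        qed
        hence "(\<bar>\<alpha>\<bar> powr p + \<bar>\<beta>\<bar> powr p) powr (1/p) \<le> (2 * mm powr p) powr (1/p)"
          using p0 by (intro powr_mono2) auto
        also have "\<dots> = 2 powr (1/p) * mm" using p0 by (simp add: powr_mult powr_powr mm_def)
        finally have "w * (\<bar>\<alpha>\<bar> powr p + \<bar>\<beta>\<bar> powr p) powr (1/p) \<le> w * (2 powr (1/p) * mm)"
          using w0 by (intro mult_left_mono)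
        also have "\<dots> = (w * 2 powr (1/p)) * mm" by simp
        also have "\<dots> \<le> 1 * mm" using wle by (intro mult_right_mono) (auto simp: mm_def)
        finally show ?thesis unfolding mt S using both mm_def by simp
      next
        case False
        have "(\<Sum>k\<in>C. \<bar>bump a \<alpha> \<beta> k\<bar> powr p) powr (1/p) \<le> max \<bar>\<alpha>\<bar> \<bar>\<beta>\<bar>"
          unfolding S using False p0 by (auto simp: powr_powr)
        hence "w * (\<Sum>k\<in>C. \<bar>bump a \<alpha> \<beta> k\<bar> powr p) powr (1/p) \<le> 1 * max \<bar>\<alpha>\<bar> \<bar>\<beta>\<bar>"
          using w0 w1 by (intro mult_mono) auto
        thus ?thesis unfolding mt by simp
      qed
    qed
  qed
  have mem: "bump a \<alpha> \<beta> \<in> morrey_space p q" for \<alpha> \<beta>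
    unfolding morrey_space_eq mem_Collect_eq by (rule bdd_aboveI2) (rule upper)
  have nrm: "morrey_norm p q (bump a \<alpha> \<beta>) = max \<bar>\<alpha>\<bar> \<bar>\<beta>\<bar>" for \<alpha> \<beta>
  proof (rule antisym)
    show "morrey_norm p q (bump a \<alpha> \<beta>) \<le> max \<bar>\<alpha>\<bar> \<bar>\<beta>\<bar>"
      unfolding morrey_norm_eq by (intro cSUP_least upper) auto
    have "\<bar>bump a \<alpha> \<beta> 0\<bar> \<le> morrey_norm p q (bump a \<alpha> \<beta>)" "\<bar>bump a \<alpha> \<beta> a\<bar> \<le> morrey_norm p q (bump a \<alpha> \<beta>)"
      using abs_le_norm[OF p0 mem] by auto
    thus "max \<bar>\<alpha>\<bar> \<bar>\<beta>\<bar> \<le> morrey_norm p q (bump a \<alpha> \<beta>)"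
      using a0 by (simp add: bump_def)
  qed
  show ?thesis using a0 mem nrm by blast
qed


lemma bump_add: "(\<lambda>k. bump a \<alpha> \<beta> k + bump a \<alpha>' \<beta>' k) = bump a (\<alpha>+\<alpha>') (\<beta>+\<beta>')"
  by (auto simp: bump_def fun_eq_iff)
lemma bump_diff: "(\<lambda>k. bump a \<alpha> \<beta> k - bump a \<alpha>' \<beta>' k) = bump a (\<alpha>-\<alpha>') (\<beta>-\<beta>')"
  by (auto simp: bump_def fun_eq_iff)
lemma bump_divdiff: "a \<noteq> 0 \<Longrightarrow> (\<lambda>k. bump a \<alpha> \<beta> k / c - bump a \<alpha>' \<beta>' k / c') = bump a (\<alpha>/c-\<alpha>'/c') (\<beta>/c-\<beta>'/c')"
  by (auto simp: bump_def fun_eq_iff diff_divide_distrib)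
lemma bump_ne0: "a \<noteq> 0 \<Longrightarrow> \<alpha> \<noteq> 0 \<Longrightarrow> bump a \<alpha> \<beta> \<noteq> (\<lambda>_. 0)"
  by (auto simp: bump_def fun_eq_iff dest: spec[of _ 0])
lemma bump_ne: "a \<noteq> 0 \<Longrightarrow> \<alpha> \<noteq> \<alpha>' \<Longrightarrow> bump a \<alpha> \<beta> \<noteq> bump a \<alpha>' \<beta>'"
  by (auto simp: bump_def fun_eq_iff dest: spec[of _ 0])

lemma nj_real:
  fixes s d a b :: real
  assumes "0\<le>s" "0\<le>d" "0\<le>a" "0\<le>b" "s \<le> a+b" "d \<le> a+b"
  shows "(s\<^sup>2+d\<^sup>2)/(2*(a\<^sup>2+b\<^sup>2)) \<le> 2"
proof (cases "a\<^sup>2+b\<^sup>2 = 0")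
  case True thus ?thesis by simp
next
  case False
  have "0 \<le> a\<^sup>2" "0 \<le> b\<^sup>2" by simp_all
  hence "0 \<le> a\<^sup>2+b\<^sup>2" by simp
  hence "0 < a\<^sup>2+b\<^sup>2" using False by (simp add: order_less_le)
  hence pos: "0 < 2*(a\<^sup>2+b\<^sup>2)" by simp
  have "s\<^sup>2 \<le> (a+b)\<^sup>2" "d\<^sup>2 \<le> (a+b)\<^sup>2" using assms by (intro power_mono; simp)+
  moreover have "(a+b)\<^sup>2 \<le> 2*(a\<^sup>2+b\<^sup>2)" using sum_power2_ge_zero[of "a-b" 0]
    by (simp add: power2_eq_square algebra_simps)
  ultimately have "s\<^sup>2+d\<^sup>2 \<le> 2 * (2*(a\<^sup>2+b\<^sup>2))" by linarith
  thus ?thesis using pos by (simp add: divide_le_eq)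
qed

lemma dw_real:
  fixes a b d w :: real
  assumes "0<a" "0<b" "0\<le>d" "0\<le>w" "w \<le> d/a + \<bar>b-a\<bar>/a" "w \<le> d/b + \<bar>b-a\<bar>/b" "\<bar>b-a\<bar> \<le> d"
  shows "(a+b)/d * w \<le> 4"
proof (cases "d = 0")
  case True thus ?thesis by simp
next
  case False
  hence d0: "d > 0" using assms by simp
  have "w * a \<le> 2*d" "w * b \<le> 2*d"
  proof -
    have "w \<le> (d + \<bar>b-a\<bar>)/a" using assms(5) by (simp add: add_divide_distrib)
    hence "w * a \<le> d + \<bar>b-a\<bar>" using assms(1) by (simp add: le_divide_eq)
    thus "w * a \<le> 2*d" using assms(7) by linarith
    have "w \<le> (d + \<bar>b-a\<bar>)/b" using assms(6) by (simp add: add_divide_distrib)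
    hence "w * b \<le> d + \<bar>b-a\<bar>" using assms(2) by (simp add: le_divide_eq)
    thus "w * b \<le> 2*d" using assms(7) by linarith
  qed
  hence "(a+b) * w \<le> 4 * d"
  proof (cases "a \<le> b")
    case True
    have "(a+b)*w \<le> 2*(b*w)" using True assms by (simp add: algebra_simps mult_right_mono)
    thus ?thesis using \<open>w*b \<le> 2*d\<close> by (simp add: mult.commute)
  next
    case False
    have "(a+b)*w \<le> 2*(a*w)" using False assms by (simp add: algebra_simps mult_right_mono)
    thus ?thesis using \<open>w*a \<le> 2*d\<close> by (simp add: mult.commute)
  qed
  thus ?thesis using d0 by (simp add: divide_le_eq mult.commute mult.left_commute)
qed




lemma NJ_up:
  fixes p q :: real
  assumes p: "1 \<le> p"
  shows "C_NJ (morrey_space p q :: (int ^ ('d::finite) \<Rightarrow> real) set) (morrey_norm p q) \<le> 2"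
  unfolding C_NJ_def
proof (rule Sup_least, clarify)
  fix x y :: "int ^ 'd \<Rightarrow> real" assume xy: "x \<in> morrey_space p q" "y \<in> morrey_space p q"
  have pl: "morrey_norm p q (\<lambda>k. x k + y k) \<le> 1 * morrey_norm p q x + 1 * morrey_norm p q y"
    by (rule conjunct2[OF norm_tri[OF p _ _ xy]]) auto
  have mi: "(\<lambda>k. x k - y k) \<in> morrey_space p q \<and> morrey_norm p q (\<lambda>k. x k - y k) \<le> 1 * morrey_norm p q x + 1 * morrey_norm p q y"
    by (rule norm_tri[OF p _ _ xy]) auto
  have pm: "(\<lambda>k. x k + y k) \<in> morrey_space p q"
    by (rule conjunct1[OF norm_tri[OF p _ _ xy, of 1 1]]) auto
  have "((morrey_norm p q (\<lambda>k. x k + y k))\<^sup>2 + (morrey_norm p q (\<lambda>k. x k - y k))\<^sup>2) / (2 * ((morrey_norm p q x)\<^sup>2 + (morrey_norm p q y)\<^sup>2)) \<le> 2"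
    apply (rule nj_real[OF norm_nonneg[OF pm] norm_nonneg[OF conjunct1[OF mi]] norm_nonneg[OF xy(1)] norm_nonneg[OF xy(2)]])
    using pl mi by simp_all
  thus "ereal (((morrey_norm p q (\<lambda>k. x k + y k))\<^sup>2 + (morrey_norm p q (\<lambda>k. x k - y k))\<^sup>2) / (2 * ((morrey_norm p q x)\<^sup>2 + (morrey_norm p q y)\<^sup>2))) \<le> 2"
    by (subst numeral_eq_ereal) (simp only: ereal_less_eq)
qed


lemma NJ_low:
  fixes p q :: real
  assumes "1 \<le> p" "p < q"
  shows "2 \<le> C_NJ (morrey_space p q :: (int ^ ('d::finite) \<Rightarrow> real) set) (morrey_norm p q)"
proof -
  obtain a :: "int ^ 'd" where a0: "a \<noteq> 0" and
    bm: "\<And>\<alpha> \<beta>. bump a \<alpha> \<beta> \<in> morrey_space p q" and bn: "\<And>\<alpha> \<beta>. morrey_norm p q (bump a \<alpha> \<beta>) = max \<bar>\<alpha>\<bar> \<bar>\<beta>\<bar>"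
    using witness[OF assms] by blast
  let ?x = "bump a 1 1" and ?y = "bump a 1 (-1)"
  have e: "ereal (((morrey_norm p q (\<lambda>k. ?x k + ?y k))\<^sup>2 + (morrey_norm p q (\<lambda>k. ?x k - ?y k))\<^sup>2) / (2 * ((morrey_norm p q ?x)\<^sup>2 + (morrey_norm p q ?y)\<^sup>2))) = 2"
    unfolding bump_add bump_diff bn by (simp add: numeral_eq_ereal)
  have "ereal (((morrey_norm p q (\<lambda>k. ?x k + ?y k))\<^sup>2 + (morrey_norm p q (\<lambda>k. ?x k - ?y k))\<^sup>2) / (2 * ((morrey_norm p q ?x)\<^sup>2 + (morrey_norm p q ?y)\<^sup>2)))
     \<le> C_NJ (morrey_space p q :: (int ^ ('d::finite) \<Rightarrow> real) set) (morrey_norm p q)"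
    unfolding C_NJ_def
    by (rule Sup_upper, rule CollectI, rule exI[of _ ?x], rule exI[of _ ?y]) (use bm bump_ne0[OF a0, of 1 1] bump_ne0[OF a0, of 1 "-1"] in auto)
  thus ?thesis unfolding e .
qed

lemma J_up:
  fixes p q :: real
  assumes p: "1 \<le> p"
  shows "C_J (morrey_space p q :: (int ^ ('d::finite) \<Rightarrow> real) set) (morrey_norm p q) \<le> 2"
  unfolding C_J_def
proof (rule Sup_least, clarify)
  fix x y :: "int ^ 'd \<Rightarrow> real" assume xy: "x \<in> morrey_space p q" "y \<in> morrey_space p q"
    and n1: "morrey_norm p q x = 1" "morrey_norm p q y = 1"
  have pl: "morrey_norm p q (\<lambda>k. x k + y k) \<le> 1 * morrey_norm p q x + 1 * morrey_norm p q y"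
    by (rule conjunct2[OF norm_tri[OF p _ _ xy]]) auto
  have "min (morrey_norm p q (\<lambda>k. x k + y k)) (morrey_norm p q (\<lambda>k. x k - y k)) \<le> 2"
    using pl n1 by linarith
  thus "ereal (min (morrey_norm p q (\<lambda>k. x k + y k)) (morrey_norm p q (\<lambda>k. x k - y k))) \<le> 2"
    by (subst numeral_eq_ereal) (simp only: ereal_less_eq)
qed

lemma J_low:
  fixes p q :: real
  assumes "1 \<le> p" "p < q"
  shows "2 \<le> C_J (morrey_space p q :: (int ^ ('d::finite) \<Rightarrow> real) set) (morrey_norm p q)"
proof -
  obtain a :: "int ^ 'd" where a0: "a \<noteq> 0" and
    bm: "\<And>\<alpha> \<beta>. bump a \<alpha> \<beta> \<in> morrey_space p q" and bn: "\<And>\<alpha> \<beta>. morrey_norm p q (bump a \<alpha> \<beta>) = max \<bar>\<alpha>\<bar> \<bar>\<beta>\<bar>"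
    using witness[OF assms] by blast
  let ?x = "bump a 1 1" and ?y = "bump a 1 (-1)"
  have e: "ereal (min (morrey_norm p q (\<lambda>k. ?x k + ?y k)) (morrey_norm p q (\<lambda>k. ?x k - ?y k))) = 2"
    unfolding bump_add bump_diff bn by (simp add: numeral_eq_ereal)
  have n: "morrey_norm p q ?x = 1" "morrey_norm p q ?y = 1" unfolding bn by simp_all
  have "ereal (min (morrey_norm p q (\<lambda>k. ?x k + ?y k)) (morrey_norm p q (\<lambda>k. ?x k - ?y k)))
     \<le> C_J (morrey_space p q :: (int ^ ('d::finite) \<Rightarrow> real) set) (morrey_norm p q)"
    unfolding C_J_def
    by (rule Sup_upper, rule CollectI, rule exI[of _ ?x], rule exI[of _ ?y]) (use bm n in auto)
  thus ?thesis unfolding e .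
qed


lemma DW_up:
  fixes p q :: real
  assumes p: "1 \<le> p"
  shows "C_DW (morrey_space p q :: (int ^ ('d::finite) \<Rightarrow> real) set) (morrey_norm p q) \<le> 4"
  unfolding C_DW_def
proof (rule Sup_least, clarify)
  let ?X = "morrey_space p q :: (int ^ 'd \<Rightarrow> real) set"
  let ?n = "morrey_norm p q :: (int ^ 'd \<Rightarrow> real) \<Rightarrow> real"
  have p0: "p > 0" using p by simp
  fix x y :: "int ^ 'd \<Rightarrow> real" assume xy: "x \<in> ?X" "y \<in> ?X" and nz: "x \<noteq> (\<lambda>_. 0)" "y \<noteq> (\<lambda>_. 0)"
  define A where "A = ?n x"
  define B where "B = ?n y"
  define D where "D = ?n (\<lambda>k. x k - y k)"
  define W where "W = ?n (\<lambda>k. x k / A - y k / B)"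
  have A0: "A > 0"
  proof -
    obtain k where "x k \<noteq> 0" using nz(1) by auto
    thus ?thesis using abs_le_norm[OF p0 xy(1), of k] unfolding A_def by linarith
  qed
  have B0: "B > 0"
  proof -
    obtain k where "y k \<noteq> 0" using nz(2) by auto
    thus ?thesis using abs_le_norm[OF p0 xy(2), of k] unfolding B_def by linarith
  qed
  have dm: "(\<lambda>k. x k - y k) \<in> ?X"
    by (rule conjunct1[OF norm_tri[OF p _ _ xy, of 1 1]]) auto
  have D0: "0 \<le> D" unfolding D_def by (rule norm_nonneg[OF dm])
  have pw1: "\<bar>x k / A - y k / B\<bar> \<le> 1 / A * \<bar>x k - y k\<bar> + \<bar>1 / A - 1 / B\<bar> * \<bar>y k\<bar>" for k
  proof -
    have "x k / A - y k / B = (1/A) * (x k - y k) + (1/A - 1/B) * y k" by (simp add: algebra_simps)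
    hence "\<bar>x k / A - y k / B\<bar> \<le> \<bar>(1/A) * (x k - y k)\<bar> + \<bar>(1/A - 1/B) * y k\<bar>"
      by (metis abs_triangle_ineq)
    thus ?thesis using A0 by (simp add: abs_mult)
  qed
  have pw2: "\<bar>x k / A - y k / B\<bar> \<le> 1 / B * \<bar>x k - y k\<bar> + \<bar>1 / A - 1 / B\<bar> * \<bar>x k\<bar>" for k
  proof -
    have "x k / A - y k / B = (1/B) * (x k - y k) + (1/A - 1/B) * x k" by (simp add: algebra_simps)
    hence "\<bar>x k / A - y k / B\<bar> \<le> \<bar>(1/B) * (x k - y k)\<bar> + \<bar>(1/A - 1/B) * x k\<bar>"
      by (metis abs_triangle_ineq)
    thus ?thesis using B0 by (simp add: abs_mult)
  qed
  have T1': "(\<lambda>k. x k / A - y k / B) \<in> ?X \<and> ?n (\<lambda>k. x k / A - y k / B) \<le> (1/A) * ?n (\<lambda>k. x k - y k) + \<bar>1/A - 1/B\<bar> * ?n y"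
    by (rule norm_tri[OF p _ _ dm xy(2)]) (use A0 pw1 in auto)
  hence T1: "(\<lambda>k. x k / A - y k / B) \<in> ?X \<and> W \<le> (1/A) * D + \<bar>1/A - 1/B\<bar> * B"
    unfolding W_def[symmetric] D_def[symmetric] B_def[symmetric] .
  have W0: "0 \<le> W" unfolding W_def by (rule norm_nonneg[OF conjunct1[OF T1]])
  have id1: "\<bar>1/A - 1/B\<bar> * B = \<bar>B-A\<bar>/A"
  proof -
    have "1/A - 1/B = (B - A)/(A*B)" using A0 B0 by (simp add: field_simps)
    hence "\<bar>1/A - 1/B\<bar> = \<bar>B-A\<bar>/(A*B)" using A0 B0 by (simp add: abs_divide)
    thus ?thesis using B0 by simp
  qed
  have id2: "\<bar>1/A - 1/B\<bar> * A = \<bar>B-A\<bar>/B"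
  proof -
    have "1/A - 1/B = (B - A)/(A*B)" using A0 B0 by (simp add: field_simps)
    hence "\<bar>1/A - 1/B\<bar> = \<bar>B-A\<bar>/(A*B)" using A0 B0 by (simp add: abs_divide)
    thus ?thesis using A0 by simp
  qed
  have W1: "W \<le> D/A + \<bar>B-A\<bar>/A" using conjunct2[OF T1] id1 by simp
  have W2: "W \<le> D/B + \<bar>B-A\<bar>/B"
  proof -
    have "?n (\<lambda>k. x k / A - y k / B) \<le> (1/B) * ?n (\<lambda>k. x k - y k) + \<bar>1/A - 1/B\<bar> * ?n x"
      by (rule conjunct2[OF norm_tri[OF p _ _ dm xy(1)]]) (use B0 pw2 in auto)
    hence "W \<le> (1/B) * D + \<bar>1/A - 1/B\<bar> * A"
      unfolding W_def[symmetric] D_def[symmetric] A_def[symmetric] .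
    thus ?thesis using id2 by simp
  qed
  have BA: "\<bar>B-A\<bar> \<le> D"
  proof -
    have "B \<le> 1*A + 1*D" unfolding A_def B_def D_def
      by (rule conjunct2[OF norm_tri[OF p _ _ xy(1) dm]]) auto
    moreover have "A \<le> 1*B + 1*D" unfolding A_def B_def D_def
      by (rule conjunct2[OF norm_tri[OF p _ _ xy(2) dm]]) auto
    ultimately show ?thesis by linarith
  qed
  have "(A + B) / D * W \<le> 4" by (rule dw_real[OF A0 B0 D0 W0 W1 W2 BA])
  thus "ereal ((?n x + ?n y) / ?n (\<lambda>k. x k - y k) * ?n (\<lambda>k. x k / ?n x - y k / ?n y)) \<le> 4"
    unfolding A_def B_def D_def W_def
    by (subst numeral_eq_ereal) (simp only: ereal_less_eq)
qed


lemma DW_low: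
  fixes p q :: real
  assumes "1 \<le> p" "p < q"
  shows "4 \<le> C_DW (morrey_space p q :: (int ^ ('d::finite) \<Rightarrow> real) set) (morrey_norm p q)"
proof -
  obtain a :: "int ^ 'd" where a0: "a \<noteq> 0" and
    bm: "\<And>\<alpha> \<beta>. bump a \<alpha> \<beta> \<in> morrey_space p q" and bn: "\<And>\<alpha> \<beta>. morrey_norm p q (bump a \<alpha> \<beta>) = max \<bar>\<alpha>\<bar> \<bar>\<beta>\<bar>"
    using witness[OF assms] by blast
  let ?C = "C_DW (morrey_space p q :: (int ^ ('d::finite) \<Rightarrow> real) set) (morrey_norm p q)"
  have el: "ereal (4 - 2*e) \<le> ?C" if e0: "0 < e" "e \<le> 1/4" for e
  proof -
    let ?x = "bump a 1 (1 - 2*e)" and ?y = "bump a (1-e) (1-e)"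
    have nx: "morrey_norm p q ?x = 1" unfolding bn using e0 by simp
    have ny: "morrey_norm p q ?y = 1 - e" unfolding bn using e0 by simp
    have nd: "morrey_norm p q (\<lambda>k. ?x k - ?y k) = e" unfolding bump_diff bn using e0 by simp
    have nw: "morrey_norm p q (\<lambda>k. ?x k / 1 - ?y k / (1-e)) = 2*e"
      unfolding bump_divdiff[OF a0] bn using e0 by simp
    have val: "(morrey_norm p q ?x + morrey_norm p q ?y) / morrey_norm p q (\<lambda>k. ?x k - ?y k) *
       morrey_norm p q (\<lambda>k. ?x k / morrey_norm p q ?x - ?y k / morrey_norm p q ?y) = 4 - 2*e"
      unfolding nx ny nd nw using e0 by (simp add: field_simps)
    have ne: "?x \<noteq> (\<lambda>_. 0)" "?y \<noteq> (\<lambda>_. 0)" "?x \<noteq> ?y"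
      using bump_ne0[OF a0, of 1 "1-2*e"] bump_ne0[OF a0, of "1-e" "1-e"] bump_ne[OF a0, of 1 "1-e" "1-2*e" "1-e"] e0
      by auto
    have "ereal ((morrey_norm p q ?x + morrey_norm p q ?y) / morrey_norm p q (\<lambda>k. ?x k - ?y k) *
       morrey_norm p q (\<lambda>k. ?x k / morrey_norm p q ?x - ?y k / morrey_norm p q ?y)) \<le> ?C"
      unfolding C_DW_def
      by (rule Sup_upper, rule CollectI, rule exI[of _ ?x], rule exI[of _ ?y]) (use bm ne in auto)
    thus ?thesis unfolding val .
  qed
  show ?thesis
  proof (rule dense_le)
    fix w :: ereal assume w4: "w < 4"
    show "w \<le> ?C"
    proof (cases w)
      case (real r)
      define e where "e = min (1/4) ((4 - r)/2)"
      have r4: "r < 4" using w4 real by (simp add: numeral_eq_ereal)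
      have e1: "e \<le> (4 - r)/2" unfolding e_def by (rule min.cobounded2)
      have e0: "0 < e" "e \<le> 1/4" "r \<le> 4 - 2*e" using r4 e1 by (auto simp: e_def)
      have "w \<le> ereal (4 - 2*e)" using real e0 by simp
      also have "\<dots> \<le> ?C" by (rule el[OF e0(1,2)])
      finally show ?thesis .
    next
      case PInf thus ?thesis using w4 by simp
    next
      case MInf thus ?thesis by simp
    qed
  qed
qed

theorem theorem2:
  fixes p q :: real
  assumes "1 \<le> p" and "p < q"
  shows "C_NJ (morrey_space p q :: (int ^ ('d::finite) \<Rightarrow> real) set) (morrey_norm p q) = 2
       \<and> C_J (morrey_space p q :: (int ^ ('d::finite) \<Rightarrow> real) set) (morrey_norm p q) = 2
       \<and> C_DW (morrey_space p q :: (int ^ ('d::finite) \<Rightarrow> real) set) (morrey_norm p q) = 4"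
  using NJ_up[OF assms(1)] NJ_low[OF assms] J_up[OF assms(1)] J_low[OF assms]
    DW_up[OF assms(1)] DW_low[OF assms]
  by (meson antisym)

end
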